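(* Consider the one-hop wireless network model described in the context, where the channel powers $\gamma_{i,j}$ are i.i.d. with the generalized Pareto distribution with p.d.f. $f(x)=\frac{\alpha}{(1+x)^{\alpha+1}}$ and c.d.f. $F(x)=1-\frac{1}{(1+x)^{\alpha}}$ for $x\ge0$, where $\alpha>2$. Then, with high probability, the achievable throughput (obtained by activating the source-destination pairs with the largest direct-link powers and silencing the rest) satisfies $T=\Omega\left(n^{1/(1+\alpha)}\right)$.
   Context: Network model: $n$ sources $S_1,\dots,S_n$ and $n$ destinations $D_1,\dots,D_n$; $S_i$ wishes to communicate with $D_i$ in one hop. The channel power from $S_i$ to $D_j$ is $\gamma_{i,j}\ge0$; all $\gamma_{i,j}$ are i.i.d. with mean $\mu$. A subset $\mathbb{S}$ of sources is active, each with power $1$; $SINR_i=\frac{\gamma_{i,i}}{N_0+\sum_{S_k\in\mathbb{S},k\ne i}\gamma_{k,i}}$ for $S_i\in\mathbb{S}$ (and $0$ otherwise), with noise variance $N_0\ge0$; $D_i$ succeeds if $SINR_i>\beta$ for a fixed constant $\beta>0$. The throughput $T$ is the number of successful destinations. "With high probability" means with probability tending to $1$ as $n\to\infty$. *)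

theory Defs
  imports "HOL-Probability.Probability"
begin

definition pareto_dist :: "real \<Rightarrow> real measure" where
  "pareto_dist \<alpha> = density lborel
     (\<lambda>x. ennreal (indicator {0..} x * (\<alpha> / (1 + x) powr (\<alpha> + 1))))"

text \<open>Probability space of an n-by-n i.i.d. channel matrix; gamma (i,j) is the
  power from source i to destination j, indices in {..<n}.\<close>
definition channel_space :: "real \<Rightarrow> nat \<Rightarrow> (nat \<times> nat \<Rightarrow> real) measure" where
  "channel_space \<alpha> n = (\<Pi>\<^sub>M p \<in> {..<n} \<times> {..<n}. pareto_dist \<alpha>)"

text \<open>Interference at destination i from the active set S (unit powers).\<close>
definition interference :: "(nat \<times> nat \<Rightarrow> real) \<Rightarrow> nat set \<Rightarrow> nat \<Rightarrow> real" where
  "interference \<gamma> S i = (\<Sum>k\<in>S - {i}. \<gamma> (k, i))"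

text \<open>D_i succeeds iff S_i is active and SINR_i > beta, i.e.
  gamma(i,i) / (N0 + interference) > beta; written multiplicatively so that a
  zero denominator (N0 = 0, no interferers) means infinite SINR.\<close>
definition succeeds :: "real \<Rightarrow> real \<Rightarrow> (nat \<times> nat \<Rightarrow> real) \<Rightarrow> nat set \<Rightarrow> nat \<Rightarrow> bool" where
  "succeeds N0 \<beta> \<gamma> S i \<longleftrightarrow> i \<in> S \<and> \<gamma> (i, i) > \<beta> * (N0 + interference \<gamma> S i)"

definition throughput :: "real \<Rightarrow> real \<Rightarrow> (nat \<times> nat \<Rightarrow> real) \<Rightarrow> nat set \<Rightarrow> nat" where
  "throughput N0 \<beta> \<gamma> S = card {i \<in> S. succeeds N0 \<beta> \<gamma> S i}"

definition top_set :: "nat \<Rightarrow> nat \<Rightarrow> (nat \<times> nat \<Rightarrow> real) \<Rightarrow> nat set \<Rightarrow> bool" where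
  "top_set n k \<gamma> S \<longleftrightarrow> S \<subseteq> {..<n} \<and> card S = k \<and>
     (\<forall>i\<in>S. \<forall>j\<in>{..<n} - S. \<gamma> (j, j) \<le> \<gamma> (i, i))"

end

theory Submission
  imports Defs "HOL-Real_Asymp.Real_Asymp"
begin


lemma deriv_aux:
  assumes x: "1 + x > (0::real)"
  shows "DERIV (\<lambda>x. - ((1+x) powr (-\<alpha>))) x :> \<alpha> / (1 + x) powr (\<alpha> + 1)"
proof -
  have "DERIV (\<lambda>x. - ((1+x) powr (-\<alpha>))) x :> - ((-\<alpha>) * (1+x) powr (-\<alpha> - 1) * (0 + 1))"
    using x by (intro derivative_intros) auto
  moreover have "(1+x) powr (-\<alpha> - 1) = 1 / (1 + x) powr (\<alpha> + 1)"
  proof -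
    have e: "-\<alpha> - 1 = -(\<alpha>+1)" by simp
    show ?thesis by (simp only: e powr_minus_divide)
  qed
  ultimately show ?thesis by simp
qed

lemma pareto_tail_nn:
  assumes a: "\<alpha> > 0" and T: "T \<ge> 0"
  shows "(\<integral>\<^sup>+x. ennreal (\<alpha> / (1 + x) powr (\<alpha> + 1)) * indicator {T..} x \<partial>lborel) = ennreal ((1+T) powr (-\<alpha>))"
proof -
  have "(\<integral>\<^sup>+x. ennreal (\<alpha> / (1 + x) powr (\<alpha> + 1)) * indicator {T..} x \<partial>lborel)
      = 0 - (- ((1+T) powr (-\<alpha>)))"
  proof (rule nn_integral_FTC_atLeast)
    show "(\<lambda>x. \<alpha> / (1 + x) powr (\<alpha> + 1)) \<in> borel_measurable borel" by measurable
    show "DERIV (\<lambda>x. - ((1+x) powr (-\<alpha>))) x :> \<alpha> / (1 + x) powr (\<alpha> + 1)" if "T \<le> x" for x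
      using that T by (intro deriv_aux) auto
    show "0 \<le> \<alpha> / (1 + x) powr (\<alpha> + 1)" if "T \<le> x" for x using a by simp
    show "((\<lambda>x. - ((1+x) powr (-\<alpha>))) \<longlongrightarrow> 0) at_top" using a by real_asymp
  qed
  then show ?thesis by simp
qed

lemma deriv_aux2:
  assumes x: "1 + x > (0::real)" and a: "\<alpha> > 2"
  shows "DERIV (\<lambda>x. - (\<alpha>/(\<alpha>-2)) * ((1+x) powr (2-\<alpha>))) x :> \<alpha> / (1 + x) powr (\<alpha> - 1)"
proof -
  have d0: "DERIV (\<lambda>x. (1+x) powr (2-\<alpha>)) x :> (2-\<alpha>) * (1+x) powr (2-\<alpha> - 1) * (0 + 1)"
    using x by (intro derivative_intros) auto
  have d: "DERIV (\<lambda>x. - (\<alpha>/(\<alpha>-2)) * ((1+x) powr (2-\<alpha>))) x :> - (\<alpha>/(\<alpha>-2)) * ((2-\<alpha>) * (1+x) powr (2-\<alpha> - 1) * (0 + 1))"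
    using d0 by (rule DERIV_cmult)
  have r: "(1+x) powr (2-\<alpha> - 1) = 1 / (1 + x) powr (\<alpha> - 1)"
  proof -
    have e: "2-\<alpha> - 1 = -(\<alpha>-1)" by simp
    show ?thesis by (simp only: e powr_minus_divide)
  qed
  have c: "- (\<alpha>/(\<alpha>-2)) * (2-\<alpha>) = \<alpha>" using a by (simp add: field_simps)
  have eq: "- (\<alpha>/(\<alpha>-2)) * ((2-\<alpha>) * (1+x) powr (2-\<alpha> - 1) * (0 + 1)) = \<alpha> / (1 + x) powr (\<alpha> - 1)"
  proof -
    have "- (\<alpha>/(\<alpha>-2)) * ((2-\<alpha>) * (1+x) powr (2-\<alpha> - 1) * (0 + 1)) = (- (\<alpha>/(\<alpha>-2)) * (2-\<alpha>)) * (1+x) powr (2-\<alpha> - 1)"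
      by simp
    also have "\<dots> = \<alpha> / (1 + x) powr (\<alpha> - 1)" by (simp only: c r) simp
    finally show ?thesis .
  qed
  from d show ?thesis by (simp only: eq)
qed

lemma pareto_sq_nn:
  assumes a: "\<alpha> > 2"
  shows "(\<integral>\<^sup>+x. ennreal (\<alpha> / (1 + x) powr (\<alpha> - 1)) * indicator {0..} x \<partial>lborel) = ennreal (\<alpha>/(\<alpha>-2))"
proof -
  have "(\<integral>\<^sup>+x. ennreal (\<alpha> / (1 + x) powr (\<alpha> - 1)) * indicator {0..} x \<partial>lborel)
      = 0 - (- (\<alpha>/(\<alpha>-2)) * ((1+0) powr (2-\<alpha>)))"
  proof (rule nn_integral_FTC_atLeast)
    show "(\<lambda>x. \<alpha> / (1 + x) powr (\<alpha> - 1)) \<in> borel_measurable borel" by measurable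
    show "DERIV (\<lambda>x. - (\<alpha>/(\<alpha>-2)) * ((1+x) powr (2-\<alpha>))) x :> \<alpha> / (1 + x) powr (\<alpha> - 1)" if "0 \<le> x" for x
      using that a by (intro deriv_aux2) auto
    show "0 \<le> \<alpha> / (1 + x) powr (\<alpha> - 1)" if "0 \<le> x" for x using a by simp
    show "((\<lambda>x. - (\<alpha>/(\<alpha>-2)) * ((1+x) powr (2-\<alpha>))) \<longlongrightarrow> 0) at_top" using a by real_asymp
  qed
  then show ?thesis by simp
qed

definition pf :: "real \<Rightarrow> real \<Rightarrow> real" where
  "pf \<alpha> x = indicator {0..} x * (\<alpha> / (1 + x) powr (\<alpha> + 1))"

lemma pf_meas[measurable]: "pf \<alpha> \<in> borel_measurable borel"
  unfolding pf_def by measurable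

lemma pf_nonneg: "\<alpha> > 0 \<Longrightarrow> pf \<alpha> x \<ge> 0"
  unfolding pf_def by (auto simp: indicator_def)

lemma pareto_dist_pf: "pareto_dist \<alpha> = density lborel (\<lambda>x. ennreal (pf \<alpha> x))"
  unfolding pareto_dist_def pf_def ..

lemma space_pareto[simp]: "space (pareto_dist \<alpha>) = UNIV"
  by (simp add: pareto_dist_def)

lemma sets_pareto[simp, measurable_cong]: "sets (pareto_dist \<alpha>) = sets borel"
  by (simp add: pareto_dist_def)

lemma emeasure_pareto_atLeast:
  assumes a: "\<alpha> > 0" and T: "T \<ge> 0"
  shows "emeasure (pareto_dist \<alpha>) {T..} = ennreal ((1+T) powr (-\<alpha>))"
proof -
  have "emeasure (pareto_dist \<alpha>) {T..} = (\<integral>\<^sup>+x. ennreal (pf \<alpha> x) * indicator {T..} x \<partial>lborel)"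
    unfolding pareto_dist_pf by (subst emeasure_density) auto
  also have "\<dots> = (\<integral>\<^sup>+x. ennreal (\<alpha> / (1 + x) powr (\<alpha> + 1)) * indicator {T..} x \<partial>lborel)"
    using T by (intro nn_integral_cong) (auto simp: pf_def indicator_def)
  finally show ?thesis using pareto_tail_nn[OF a T] by simp
qed

lemma prob_space_pareto:
  assumes a: "\<alpha> > 0" shows "prob_space (pareto_dist \<alpha>)"
proof
  have "space (pareto_dist \<alpha>) = {0..} \<union> {..<0}" by auto
  have "emeasure (pareto_dist \<alpha>) (space (pareto_dist \<alpha>)) = (\<integral>\<^sup>+x. ennreal (pf \<alpha> x) * indicator UNIV x \<partial>lborel)"
    unfolding pareto_dist_pf by (subst emeasure_density) auto
  also have "\<dots> = (\<integral>\<^sup>+x. ennreal (\<alpha> / (1 + x) powr (\<alpha> + 1)) * indicator {0..} x \<partial>lborel)"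
    by (intro nn_integral_cong) (auto simp: pf_def indicator_def)
  finally show "emeasure (pareto_dist \<alpha>) (space (pareto_dist \<alpha>)) = 1"
    using pareto_tail_nn[OF a, of 0] by simp
qed

lemma AE_pareto_nonneg:
  "AE x in pareto_dist \<alpha>. x \<ge> 0"
  unfolding pareto_dist_pf by (subst AE_density) (auto simp: pf_def indicator_def)

lemma integrable_pareto_sq:
  assumes a: "\<alpha> > 2"
  shows "integrable (pareto_dist \<alpha>) (\<lambda>x. x^2)"
proof -
  have "integrable lborel (\<lambda>x. pf \<alpha> x *\<^sub>R x^2)"
  proof (rule integrableI_nonneg)
    show "(\<lambda>x. pf \<alpha> x *\<^sub>R x^2) \<in> borel_measurable lborel" by measurable
    show "AE x in lborel. 0 \<le> pf \<alpha> x *\<^sub>R x^2" using a pf_nonneg[of \<alpha>] by auto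
    have "(\<integral>\<^sup>+x. ennreal (pf \<alpha> x *\<^sub>R x^2) \<partial>lborel) \<le> (\<integral>\<^sup>+x. ennreal (\<alpha> / (1 + x) powr (\<alpha> - 1)) * indicator {0..} x \<partial>lborel)"
    proof (intro nn_integral_mono)
      fix x :: real
      show "ennreal (pf \<alpha> x *\<^sub>R x^2) \<le> ennreal (\<alpha> / (1 + x) powr (\<alpha> - 1)) * indicator {0..} x"
      proof (cases "x \<ge> 0")
        case True
        have p: "(1+x) powr (\<alpha>+1) = (1+x) powr (\<alpha>-1) * (1+x)^2" "(1+x) powr (1+\<alpha>) = (1+x) powr (\<alpha>-1) * (1+x)^2"
          using True by (simp_all add: powr_add[symmetric] add.commute flip: powr_numeral)
        have "x^2 \<le> (1+x)^2" using True by (intro power_mono) auto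
        then have "\<alpha> / (1 + x) powr (\<alpha> + 1) * x^2 \<le> \<alpha> / (1 + x) powr (\<alpha> - 1)"
          using True a by (simp add: p(1) divide_simps mult.commute)
        then show ?thesis using True by (simp add: pf_def ennreal_leI)
      qed (simp add: pf_def)
    qed
    also have "\<dots> < \<infinity>" using pareto_sq_nn[OF a] by simp
    finally show "(\<integral>\<^sup>+x. ennreal (pf \<alpha> x *\<^sub>R x^2) \<partial>lborel) < \<infinity>" .
  qed
  then show ?thesis unfolding pareto_dist_pf
    using a pf_nonneg[of \<alpha>] by (subst integrable_density) auto
qed




locale chan =
  fixes \<alpha> :: real and n :: nat and T :: real
  assumes a2: "\<alpha> > 2" and T0: "T \<ge> 0"
begin

abbreviation "P \<equiv> pareto_dist \<alpha>"
abbreviation "I \<equiv> {..<n} \<times> {..<n}"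
abbreviation "M \<equiv> channel_space \<alpha> n"

lemma M_def: "M = PiM I (\<lambda>_. P)" by (simp add: channel_space_def)

lemma P_prob: "prob_space P" using a2 by (intro prob_space_pareto) auto

sublocale Pp: prob_space P by (rule P_prob)

sublocale PS: product_sigma_finite "\<lambda>_::nat\<times>nat. P"
  by unfold_locales

sublocale Mp: prob_space M unfolding M_def by (intro prob_space_PiM P_prob)

lemma finI: "finite I" by simp

lemma exp_prod:
  fixes h :: "nat \<times> nat \<Rightarrow> real \<Rightarrow> real"
  assumes "\<And>q. q \<in> I \<Longrightarrow> integrable P (h q)"
  shows "(\<integral>x. (\<Prod>q\<in>I. h q (x q)) \<partial>M) = (\<Prod>q\<in>I. \<integral>v. h q v \<partial>P)"
  unfolding M_def by (rule PS.product_integral_prod[OF finI assms])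

lemma int_prod:
  fixes h :: "nat \<times> nat \<Rightarrow> real \<Rightarrow> real"
  assumes "\<And>q. q \<in> I \<Longrightarrow> integrable P (h q)"
  shows "integrable M (\<lambda>x. (\<Prod>q\<in>I. h q (x q)))"
  unfolding M_def by (rule PS.product_integrable_prod[OF finI assms])

lemma AE_nonneg: "AE x in M. \<forall>z\<in>I. x z \<ge> 0"
proof (rule AE_finite_allI[OF finI])
  fix z assume "z \<in> I"
  then show "AE x in M. x z \<ge> 0" unfolding M_def
    by (intro AE_PiM_component[where P="\<lambda>v. v \<ge> 0"] P_prob AE_pareto_nonneg)
qed

lemma meas_comp[measurable]: "(\<lambda>x. x z) \<in> borel_measurable M"
proof (cases "z \<in> I")
  case True then show ?thesis unfolding M_def by measurable
next
  case False
  have "(\<lambda>x. undefined) \<in> borel_measurable M" by simp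
  moreover have "\<And>x. x \<in> space M \<Longrightarrow> undefined = x z"
    using False unfolding M_def by (cases z) (auto simp: space_PiM PiE_def extensional_def)
  ultimately show ?thesis by (rule measurable_cong[THEN iffD1, rotated]) 
qed

definition ind :: "real \<Rightarrow> real" where "ind v = indicator {T..} v"
definition p :: real where "p = (1+T) powr (-\<alpha>)"
definition \<mu> :: real where "\<mu> = (\<integral>v. v \<partial>P)"
definition \<sigma>2 :: real where "\<sigma>2 = (\<integral>v. (v - \<mu>)^2 \<partial>P)"

lemma ind_meas[measurable]: "ind \<in> borel_measurable borel" unfolding ind_def by measurable

lemma meas_P_id[measurable]: "(\<lambda>v. v) \<in> borel_measurable P"
  by (subst measurable_cong_sets[OF sets_pareto refl]) simp
lemma meas_P_borel: "f \<in> borel_measurable borel \<Longrightarrow> f \<in> borel_measurable P"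
  by (subst measurable_cong_sets[OF sets_pareto refl])

lemma int_sq: "integrable P (\<lambda>v. v^2)" using integrable_pareto_sq[OF a2] .
lemma int_id: "integrable P (\<lambda>v. v)"
  by (rule Pp.square_integrable_imp_integrable[OF _ int_sq]) simp
lemma int_sqc: "integrable P (\<lambda>v. (v - c)^2)"
  by (simp add: power2_diff int_sq int_id)
lemma int_ind: "integrable P (\<lambda>v. ind v * f v)" if "integrable P f"
proof (rule Bochner_Integration.integrable_bound[OF that])
  show "(\<lambda>v. ind v * f v) \<in> borel_measurable P" using that by measurable
  show "AE x in P. norm (ind x * f x) \<le> norm (f x)" by (auto simp: ind_def indicator_def)
qed
lemma int_const: "integrable P (\<lambda>v. c)" by simp

lemma ind_int: "(\<integral>v. ind v \<partial>P) = p"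
proof -
  have "(\<integral>v. ind v \<partial>P) = Pp.prob {T..}" unfolding ind_def by simp
  also have "\<dots> = p" using emeasure_pareto_atLeast[of \<alpha> T] a2 T0
    by (simp add: p_def Pp.emeasure_eq_measure)
  finally show ?thesis .
qed

lemma mu_nonneg: "\<mu> \<ge> 0" unfolding \<mu>_def using AE_pareto_nonneg by (intro integral_nonneg_AE) 
lemma sigma_nonneg: "\<sigma>2 \<ge> 0" unfolding \<sigma>2_def by simp
lemma p_le1: "p \<le> 1" "p \<ge> 0"
proof -
  have "(1+T) powr \<alpha> \<ge> 1" using a2 T0 by (intro ge_one_powr_ge_zero) auto
  then show "p \<le> 1" "p \<ge> 0" unfolding p_def by (auto simp: powr_minus inverse_le_1_iff)
qed


lemma ind_sq: "ind v * ind v = ind v" "ind v * (ind v * f) = ind v * f"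
  by (auto simp: ind_def indicator_def)
lemma ind_01: "ind v = 0 \<or> ind v = 1" by (auto simp: ind_def indicator_def)
lemma ind_abs: "\<bar>ind v - p\<bar> \<le> 1 + p" using ind_01[of v] p_le1 by auto
lemma ind_measP[measurable]: "ind \<in> borel_measurable P"
  by (subst measurable_cong_sets[OF sets_pareto refl]) (rule ind_meas)
lemma int_ifs: "integrable P (\<lambda>v. (if c1 then ind v - p else 1) * (if c2 then ind v - p else 1))"
proof (rule Pp.integrable_const_bound[where B="(1+p)*(1+p)"])
  show "AE x in P. norm ((if c1 then ind x - p else 1) * (if c2 then ind x - p else 1)) \<le> (1+p)*(1+p)"
  proof (intro AE_I2)
    fix x
    have "\<bar>if c then ind x - p else 1\<bar> \<le> 1 + p" for c using ind_abs[of x] p_le1 by auto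
    then show "norm ((if c1 then ind x - p else 1) * (if c2 then ind x - p else 1)) \<le> (1+p)*(1+p)"
      unfolding real_norm_def abs_mult using p_le1 by (intro mult_mono) auto
  qed
qed measurable
lemma prob_UNIV[simp]: "Pp.prob UNIV = 1" using Pp.prob_space by simp
lemma int_ind1: "integrable P ind" using int_ind[of "\<lambda>_. 1"] by simp

lemma int_delta: "(\<integral>v. (ind v - p) * (ind v - p) \<partial>P) = p - p*p"
proof -
  have "(\<lambda>v. (ind v - p) * (ind v - p)) = (\<lambda>v. (1 - 2*p) * ind v + p*p)"
  proof (rule ext)
    fix v show "(ind v - p) * (ind v - p) = (1 - 2*p) * ind v + p*p"
      by (cases "T \<le> v") (simp_all add: ind_def algebra_simps)
  qed
  moreover have "(\<integral>v. (1 - 2*p) * ind v + p*p \<partial>P) = (1 - 2*p) * p + p*p"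
    using int_ind1 by (simp add: ind_int)
  ultimately show ?thesis by (simp add: algebra_simps)
qed

definition X :: "nat \<Rightarrow> (nat \<times> nat \<Rightarrow> real) \<Rightarrow> real" where "X a x = ind (x (a,a))"
definition mm :: "(nat \<times> nat \<Rightarrow> real) \<Rightarrow> real" where "mm x = (\<Sum>a<n. X a x)"

lemma meas_X[measurable]: "X a \<in> borel_measurable M" unfolding X_def
  by (rule measurable_compose[OF meas_comp ind_meas])
lemma meas_mm[measurable]: "mm \<in> borel_measurable M" unfolding mm_def
  by (rule borel_measurable_sum) (rule meas_X)

lemma prod_if1: "(\<Prod>q\<in>I. if q = c then f q else 1) = (if c \<in> I then f c else 1)"
  by (rule prod.delta[OF finI])
lemma E_pair_m:
  assumes ab: "a < n" "b < n"
  shows "(\<integral>x. (X a x - p) * (X b x - p) \<partial>M) = (if a = b then p - p*p else 0)"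
proof -
  define h where "h q v = (if q = (a,a) then ind v - p else 1) * (if q = (b,b) then ind v - p else 1)" for q v
  have hi: "integrable P (h q)" for q
    unfolding h_def by (rule int_ifs)
  have rep: "(X a x - p) * (X b x - p) = (\<Prod>q\<in>I. h q (x q))" for x
    unfolding h_def prod.distrib prod_if1 using ab by (simp add: X_def)
  have "(\<integral>x. (X a x - p) * (X b x - p) \<partial>M) = (\<Prod>q\<in>I. \<integral>v. h q v \<partial>P)"
    unfolding rep by (rule exp_prod[OF hi])
  also have "\<dots> = (if a = b then p - p*p else 0)"
  proof (cases "a = b")
    case True
    have "(\<integral>v. h q v \<partial>P) = (if q = (a,a) then p - p*p else 1)" for q
      unfolding h_def using True int_delta by auto
    then show ?thesis using True ab by (simp add: prod_if1)
  next
    case False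
    have "(\<integral>v. h (a,a) v \<partial>P) = 0" unfolding h_def using False int_ind1 by (simp add: ind_int)
    then show ?thesis using False ab by (intro trans[OF prod_zero]) auto
  qed
  finally show ?thesis .
qed

lemma int_pair_m: "integrable M (\<lambda>x. (X a x - p) * (X b x - p))"
proof (rule Mp.integrable_const_bound[where B="(1+p)*(1+p)"])
  show "AE x in M. norm ((X a x - p) * (X b x - p)) \<le> (1+p)*(1+p)"
  proof (intro AE_I2)
    fix x
    show "norm ((X a x - p) * (X b x - p)) \<le> (1+p)*(1+p)"
      unfolding real_norm_def abs_mult X_def using p_le1 ind_abs by (intro mult_mono) auto
  qed
  show "(\<lambda>x. (X a x - p) * (X b x - p)) \<in> borel_measurable M"
    by (intro borel_measurable_times borel_measurable_diff meas_X borel_measurable_const)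
qed

lemma E_m: "(\<integral>x. (mm x - n*p)^2 \<partial>M) \<le> n*p"
proof -
  have eq: "(mm x - n*p)^2 = (\<Sum>a<n. \<Sum>b<n. (X a x - p) * (X b x - p))" for x
  proof -
    have "mm x - n*p = (\<Sum>a<n. X a x - p)" unfolding mm_def by (simp add: sum_subtractf)
    then show ?thesis by (simp add: power2_eq_square sum_product)
  qed
  have "(\<integral>x. (mm x - n*p)^2 \<partial>M) = (\<Sum>a<n. \<Sum>b<n. \<integral>x. (X a x - p) * (X b x - p) \<partial>M)"
    unfolding eq using int_pair_m by (simp add: integral_sum integrable_sum)
  also have "\<dots> = (\<Sum>a<n. p - p*p)"
    by (intro sum.cong refl) (simp add: E_pair_m if_distrib cong: if_cong)
  also have "\<dots> \<le> n*p" using p_le1 by (simp add: mult_left_mono)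
  finally show ?thesis .
qed


lemma int_bnd:
  assumes "f \<in> borel_measurable P" "\<And>v. \<bar>f v\<bar> \<le> 1 + (v - \<mu>)^2"
  shows "integrable P f"
proof (rule Bochner_Integration.integrable_bound[where f="\<lambda>v. 1 + (v - \<mu>)^2"])
  show "integrable P (\<lambda>v. 1 + (v - \<mu>)^2)" using int_sqc by simp
  show "f \<in> borel_measurable P" by fact
  show "AE x in P. norm (f x) \<le> norm (1 + (x - \<mu>)^2)" using assms(2) by (intro AE_I2) auto
qed

lemma if_ind_abs: "\<bar>if c then ind v else 1\<bar> \<le> 1" using ind_01[of v] by auto
lemma w_le: "\<bar>w\<bar> \<le> 1 + (w::real)^2"
proof (cases "\<bar>w\<bar> \<le> 1")
  case True
  have "0 \<le> w^2" by simp
  then show ?thesis using True by linarith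
next
  case False
  then have "\<bar>w\<bar> * 1 \<le> \<bar>w\<bar> * \<bar>w\<bar>" by (intro mult_left_mono) auto
  also have "\<bar>w\<bar> * \<bar>w\<bar> = w^2" by (simp add: power2_eq_square abs_mult_self_eq)
  finally show ?thesis by simp
qed

lemma ab_w: "\<bar>(if c5 then w else 1) * (if c6 then w else 1)\<bar> \<le> 1 + (w::real)^2"
proof (cases c5)
  case True note c5 = True
  show ?thesis
  proof (cases c6)
    case True
    then show ?thesis using c5 by (simp add: power2_eq_square abs_mult_self_eq)
  next
    case False
    then show ?thesis using c5 w_le[of w] by simp
  qed
next
  case False note c5 = False
  show ?thesis
  proof (cases c6)
    case True
    then show ?thesis using c5 w_le[of w] by simp
  next
    case False
    have "0 \<le> w^2" by simp
    then show ?thesis using c5 False by simp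
  qed
qed

definition J :: "(nat \<times> nat) set" where "J = {(a,b). a < n \<and> b < n \<and> a \<noteq> b}"
lemma finJ: "finite J" unfolding J_def by (rule finite_subset[of _ I]) auto
lemma cardJ: "card J \<le> n*n" unfolding J_def
  by (rule order.trans[OF card_mono[of I]]) (auto simp: card_cartesian_product)

definition t :: "nat \<times> nat \<Rightarrow> (nat \<times> nat \<Rightarrow> real) \<Rightarrow> real" where
  "t ab x = X (fst ab) x * X (snd ab) x * (x ab - \<mu>)"
definition U :: "(nat \<times> nat \<Rightarrow> real) \<Rightarrow> real" where "U x = (\<Sum>ab\<in>J. t ab x)"

lemma meas_t[measurable]: "t ab \<in> borel_measurable M"
  unfolding t_def by (intro borel_measurable_times borel_measurable_diff meas_X meas_comp borel_measurable_const)
lemma meas_U[measurable]: "U \<in> borel_measurable M"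
  unfolding U_def by (intro borel_measurable_sum meas_t)

lemma meas_if: "f \<in> borel_measurable P \<Longrightarrow> g \<in> borel_measurable P \<Longrightarrow> (\<lambda>v. if c then f v else g v) \<in> borel_measurable P"
  by (cases c) auto
lemmas meas_intros = borel_measurable_times meas_if ind_measP borel_measurable_const borel_measurable_diff meas_P_id borel_measurable_power

definition h6 where "h6 a b c d q v =
  ((if q = (a,a) then ind v else 1) * (if q = (b,b) then ind v else 1) * (if q = (c,c) then ind v else 1) * (if q = (d,d) then ind v else 1))
  * ((if q = (a,b) then v - \<mu> else 1) * (if q = (c,d) then v - \<mu> else 1))"

lemma int_h6: "integrable P (h6 a b c d q)"
proof (rule int_bnd)
  show "h6 a b c d q \<in> borel_measurable P" unfolding h6_def by (intro meas_intros)
  fix v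
  let ?A = "(if q = (a,a) then ind v else 1) * (if q = (b,b) then ind v else 1) * (if q = (c,c) then ind v else 1) * (if q = (d,d) then ind v else 1)"
  let ?B = "(if q = (a,b) then v - \<mu> else 1) * (if q = (c,d) then v - \<mu> else 1)"
  have A: "\<bar>?A\<bar> \<le> 1" unfolding abs_mult
    using if_ind_abs[of "q = (a,a)" v] if_ind_abs[of "q = (b,b)" v] if_ind_abs[of "q = (c,c)" v] if_ind_abs[of "q = (d,d)" v]
    by (intro mult_le_one abs_ge_zero) (simp_all only: abs_ge_zero)
  have B: "\<bar>?B\<bar> \<le> 1 + (v - \<mu>)^2" by (rule ab_w)
  have "\<bar>?A * ?B\<bar> \<le> 1 * (1 + (v - \<mu>)^2)" unfolding abs_mult[of ?A ?B]
    by (rule mult_mono[OF A B zero_le_one abs_ge_zero])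
  then show "\<bar>h6 a b c d q v\<bar> \<le> 1 + (v - \<mu>)^2" unfolding h6_def by (simp only: mult_1_left)
qed

lemma rep_h6:
  assumes "(a,b) \<in> J" "(c,d) \<in> J"
  shows "t (a,b) x * t (c,d) x = (\<Prod>q\<in>I. h6 a b c d q (x q))"
proof -
  have "(\<Prod>q\<in>I. h6 a b c d q (x q)) = (X a x * X b x * X c x * X d x) * ((x (a,b) - \<mu>) * (x (c,d) - \<mu>))"
    unfolding h6_def prod.distrib prod_if1 using assms by (simp add: X_def J_def)
  also have "\<dots> = t (a,b) x * t (c,d) x" unfolding t_def by (simp add: algebra_simps)
  finally show ?thesis by simp
qed

lemma int_cross:
  assumes "ab \<in> J" "cd \<in> J"
  shows "integrable M (\<lambda>x. t ab x * t cd x)"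
proof -
  obtain a b c d where e: "ab = (a,b)" "cd = (c,d)" by (cases ab; cases cd) auto
  show ?thesis unfolding e using rep_h6[of a b c d] assms e
    by (simp only:) (rule int_prod[OF int_h6])
qed

lemma mu_int: "(\<integral>v. v - \<mu> \<partial>P) = 0" using int_id by (simp add: \<mu>_def)

lemma E_cross0:
  assumes J: "(a,b) \<in> J" "(c,d) \<in> J" and ne: "(a,b) \<noteq> (c,d)"
  shows "(\<integral>x. t (a,b) x * t (c,d) x \<partial>M) = 0"
proof -
  have "(\<integral>x. t (a,b) x * t (c,d) x \<partial>M) = (\<Prod>q\<in>I. \<integral>v. h6 a b c d q v \<partial>P)"
    using rep_h6[OF J] by (simp only:) (rule exp_prod[OF int_h6])
  also have "\<dots> = 0"
  proof (rule prod_zero)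
    have ab: "a \<noteq> b" "a < n" "b < n" using J by (auto simp: J_def)
    have "h6 a b c d (a,b) = (\<lambda>v. v - \<mu>)" using ab ne by (auto simp: h6_def fun_eq_iff)
    then show "\<exists>q\<in>I. (\<integral>v. h6 a b c d q v \<partial>P) = 0" using ab mu_int by (intro bexI[of _ "(a,b)"]) auto
  qed simp
  finally show ?thesis .
qed

definition h3 where "h3 a b q v =
  ((if q = (a,a) then ind v else 1) * (if q = (b,b) then ind v else 1)) * (if q = (a,b) then (v - \<mu>)^2 else 1)"

lemma int_h3: "integrable P (h3 a b q)"
proof (rule int_bnd)
  show "h3 a b q \<in> borel_measurable P" unfolding h3_def by (intro meas_intros)
  fix v
  let ?A = "(if q = (a,a) then ind v else 1) * (if q = (b,b) then ind v else 1)"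
  let ?B = "(if q = (a,b) then (v - \<mu>)^2 else 1)"
  have A: "\<bar>?A\<bar> \<le> 1" unfolding abs_mult
    using if_ind_abs[of "q = (a,a)" v] if_ind_abs[of "q = (b,b)" v]
    by (intro mult_le_one abs_ge_zero) (simp_all only: abs_ge_zero)
  have B: "\<bar>?B\<bar> \<le> 1 + (v - \<mu>)^2" by auto
  have "\<bar>?A * ?B\<bar> \<le> 1 * (1 + (v - \<mu>)^2)" unfolding abs_mult[of ?A ?B]
    by (rule mult_mono[OF A B zero_le_one abs_ge_zero])
  then show "\<bar>h3 a b q v\<bar> \<le> 1 + (v - \<mu>)^2" unfolding h3_def by (simp only: mult_1_left)
qed

lemma E_diag:
  assumes J: "(a,b) \<in> J"
  shows "(\<integral>x. t (a,b) x * t (a,b) x \<partial>M) = p * p * \<sigma>2"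
proof -
  have ab: "a \<noteq> b" "a < n" "b < n" using J by (auto simp: J_def)
  have rep: "t (a,b) x * t (a,b) x = (\<Prod>q\<in>I. h3 a b q (x q))" for x
  proof -
    have "(\<Prod>q\<in>I. h3 a b q (x q)) = (X a x * X b x) * (x (a,b) - \<mu>)^2"
      unfolding h3_def prod.distrib prod_if1 using ab by (simp add: X_def)
    also have "\<dots> = t (a,b) x * t (a,b) x"
    proof -
      have "t (a,b) x * t (a,b) x = (X a x * X a x) * (X b x * X b x) * (x (a,b) - \<mu>)^2"
        unfolding t_def by (simp add: power2_eq_square mult_ac)
      then show ?thesis by (simp add: X_def ind_sq)
    qed
    finally show ?thesis by simp
  qed
  have hq: "(\<integral>v. h3 a b q v \<partial>P) = (if q = (a,a) then p else 1) * (if q = (b,b) then p else 1) * (if q = (a,b) then \<sigma>2 else 1)" for q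
    using ab by (cases "q = (a,a)"; cases "q = (b,b)"; cases "q = (a,b)") (auto simp: h3_def ind_int \<sigma>2_def)
  have "(\<integral>x. t (a,b) x * t (a,b) x \<partial>M) = (\<Prod>q\<in>I. \<integral>v. h3 a b q v \<partial>P)"
    unfolding rep by (rule exp_prod[OF int_h3])
  also have "\<dots> = p * p * \<sigma>2" unfolding hq prod.distrib prod_if1 using ab by simp
  finally show ?thesis .
qed

lemma E_U: "(\<integral>x. (U x)^2 \<partial>M) \<le> n*n*(p*p*\<sigma>2)"
proof -
  have eq: "(U x)^2 = (\<Sum>ab\<in>J. \<Sum>cd\<in>J. t ab x * t cd x)" for x
    unfolding U_def by (simp add: power2_eq_square sum_product)
  have "(\<integral>x. (U x)^2 \<partial>M) = (\<Sum>ab\<in>J. \<Sum>cd\<in>J. \<integral>x. t ab x * t cd x \<partial>M)"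
    unfolding eq using int_cross by (simp add: integral_sum integrable_sum)
  also have "\<dots> = (\<Sum>ab\<in>J. p*p*\<sigma>2)"
  proof (intro sum.cong refl)
    fix ab assume ab: "ab \<in> J"
    have "(\<Sum>cd\<in>J. \<integral>x. t ab x * t cd x \<partial>M) = (\<Sum>cd\<in>J. if cd = ab then p*p*\<sigma>2 else 0)"
    proof (intro sum.cong refl)
      fix cd assume cd: "cd \<in> J"
      obtain a b c d where e: "ab = (a,b)" "cd = (c,d)" by (cases ab; cases cd) auto
      show "(\<integral>x. t ab x * t cd x \<partial>M) = (if cd = ab then p*p*\<sigma>2 else 0)"
        using E_cross0[of a b c d] E_diag[of a b] ab cd unfolding e by auto
    qed
    also have "\<dots> = p*p*\<sigma>2" using ab finJ by (simp add: sum.delta)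
    finally show "(\<Sum>cd\<in>J. \<integral>x. t ab x * t cd x \<partial>M) = p*p*\<sigma>2" .
  qed
  also have "\<dots> = card J * (p*p*\<sigma>2)" by simp
  also have "\<dots> \<le> n*n*(p*p*\<sigma>2)"
    using cardJ sigma_nonneg by (intro mult_right_mono) (auto simp flip: of_nat_mult)
  finally show ?thesis .
qed

end



context chan begin

definition DD :: "(nat \<times> nat \<Rightarrow> real) \<Rightarrow> nat set" where "DD x = {a\<in>{..<n}. T \<le> x (a,a)}"

lemma mm_card: "mm x = real (card (DD x))"
proof -
  have "mm x = (\<Sum>a<n. if T \<le> x (a,a) then 1 else 0)"
    unfolding mm_def X_def ind_def by (intro sum.cong) (auto simp: indicator_def)
  also have "\<dots> = real (card (DD x))"
  proof -
    have e: "{..<n} \<inter> {a. T \<le> x (a,a)} = DD x" by (auto simp: DD_def)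
    show ?thesis by (simp add: sum.If_cases e)
  qed
  finally show ?thesis .
qed

lemma top_sub_DD:
  assumes top: "top_set n k x S" and k: "k \<le> card (DD x)"
  shows "S \<subseteq> DD x"
proof
  fix i assume iS: "i \<in> S"
  have Sn: "S \<subseteq> {..<n}" and cS: "card S = k" and dom: "\<forall>i\<in>S. \<forall>j\<in>{..<n} - S. x (j, j) \<le> x (i, i)"
    using top unfolding top_set_def by auto
  show "i \<in> DD x"
  proof (rule ccontr)
    assume nD: "i \<notin> DD x"
    then have xi: "x (i,i) < T" using iS Sn unfolding DD_def by auto
    have "DD x \<subseteq> S - {i}"
    proof
      fix j assume jD: "j \<in> DD x"
      then have jn: "j < n" and jT: "T \<le> x (j,j)" unfolding DD_def by auto
      have "j \<in> S" using dom iS jn xi jT by force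
      moreover have "j \<noteq> i" using jD nD by auto
      ultimately show "j \<in> S - {i}" by auto
    qed
    then have "card (DD x) \<le> card (S - {i})"
      using Sn by (intro card_mono) (auto intro: finite_subset)
    also have "\<dots> < card S" using iS Sn by (intro card_Diff1_less) (auto intro: finite_subset)
    finally show False using k cS by simp
  qed
qed


lemma X_01: "X a x = 0 \<or> X a x = 1" unfolding X_def using ind_01 by auto
lemma X_nonneg: "X a x \<ge> 0" using X_01[of a x] by auto

lemma J_Sigma: "J = (SIGMA a:{..<n}. {..<n} - {a})" unfolding J_def by auto

lemma sum_J: "(\<Sum>ab\<in>J. g ab) = (\<Sum>a<n. \<Sum>b<n. if a \<noteq> b then g (a,b) else 0)"
proof -
  have "(\<Sum>ab\<in>J. g ab) = (\<Sum>a<n. \<Sum>b\<in>{..<n} - {a}. g (a,b))"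
    unfolding J_Sigma by (subst sum.Sigma) auto
  also have "\<dots> = (\<Sum>a<n. \<Sum>b<n. if a \<noteq> b then g (a,b) else 0)"
  proof -
    have eq: "\<And>a. {..<n} - {a} = {b\<in>{..<n}. a \<noteq> b}" by auto
    show ?thesis by (simp only: eq sum.inter_filter[OF finite_lessThan])
  qed
  finally show ?thesis .
qed

definition Wd :: "(nat \<times> nat \<Rightarrow> real) \<Rightarrow> real" where
  "Wd x = (\<Sum>i\<in>DD x. interference x (DD x) i)"

lemma Wd_eq: "Wd x = (\<Sum>ab\<in>J. X (fst ab) x * X (snd ab) x * x ab)"
proof -
  have XD: "X a x = (if a \<in> DD x then 1 else 0)" if "a < n" for a
    using that unfolding X_def ind_def DD_def by (auto simp: indicator_def)
  have inner: "interference x (DD x) i = (\<Sum>k<n. if k \<noteq> i then X k x * x (k,i) else 0)" for i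
  proof -
    have e: "DD x - {i} = {k\<in>{..<n}. T \<le> x (k,k) \<and> k \<noteq> i}" unfolding DD_def by auto
    have "interference x (DD x) i = (\<Sum>k<n. if T \<le> x (k,k) \<and> k \<noteq> i then x (k,i) else 0)"
      unfolding interference_def e sum.inter_filter[OF finite_lessThan] ..
    also have "\<dots> = (\<Sum>k<n. if k \<noteq> i then X k x * x (k,i) else 0)"
      by (intro sum.cong refl) (auto simp: X_def ind_def indicator_def)
    finally show ?thesis .
  qed
  have "Wd x = (\<Sum>i<n. if T \<le> x (i,i) then interference x (DD x) i else 0)"
  proof -
    have "(\<Sum>i\<in>DD x. f i) = (\<Sum>i<n. if T \<le> x (i,i) then f i else 0)" for f
      unfolding DD_def sum.inter_filter[OF finite_lessThan] ..
    then show ?thesis unfolding Wd_def .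
  qed
  also have "\<dots> = (\<Sum>i<n. X i x * (\<Sum>k<n. if k \<noteq> i then X k x * x (k,i) else 0))"
    by (intro sum.cong refl) (auto simp: X_def ind_def indicator_def inner)
  also have "\<dots> = (\<Sum>i<n. \<Sum>k<n. if k \<noteq> i then X k x * X i x * x (k,i) else 0)"
    by (simp add: sum_distrib_left if_distrib mult_ac cong: if_cong)
  also have "\<dots> = (\<Sum>k<n. \<Sum>i<n. if k \<noteq> i then X k x * X i x * x (k,i) else 0)"
    by (rule sum.swap)
  also have "\<dots> = (\<Sum>ab\<in>J. X (fst ab) x * X (snd ab) x * x ab)"
    unfolding sum_J by (simp only: fst_conv snd_conv)
  finally show ?thesis .
qed

lemma Wd_le: "Wd x \<le> U x + \<mu> * (mm x)^2"
proof -
  have "Wd x = (\<Sum>ab\<in>J. t ab x + \<mu> * (X (fst ab) x * X (snd ab) x))"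
    unfolding Wd_eq t_def by (intro sum.cong refl) (simp add: algebra_simps)
  also have "\<dots> = U x + \<mu> * (\<Sum>ab\<in>J. X (fst ab) x * X (snd ab) x)"
    by (simp add: sum.distrib U_def sum_distrib_left)
  finally have "Wd x = U x + \<mu> * (\<Sum>ab\<in>J. X (fst ab) x * X (snd ab) x)" .
  moreover have "(\<Sum>ab\<in>J. X (fst ab) x * X (snd ab) x) \<le> (mm x)^2"
  proof -
    have "(\<Sum>ab\<in>J. X (fst ab) x * X (snd ab) x) \<le> (\<Sum>ab\<in>I. X (fst ab) x * X (snd ab) x)"
      by (intro sum_mono2) (auto simp: J_def X_nonneg)
    also have "\<dots> = (mm x)^2"
      unfolding mm_def power2_eq_square sum_product sum.cartesian_product by (simp add: split_beta)
    finally show ?thesis .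
  qed
  ultimately show ?thesis using mu_nonneg by (simp add: mult_left_mono)
qed


lemma intf_nonneg:
  assumes nn: "\<forall>z\<in>I. x z \<ge> 0" and A: "A \<subseteq> {..<n}" and i: "i < n"
  shows "interference x A i \<ge> 0"
  unfolding interference_def using nn A i by (intro sum_nonneg) auto

lemma det:
  assumes nn: "\<forall>z\<in>I. x z \<ge> 0" and km: "real k \<le> mm x" and top: "top_set n k x S"
    and th: "\<theta> > 0" and b: "\<beta> > 0" and Tb: "\<beta>*(N0+\<theta>) \<le> T"
  shows "real k - Wd x / \<theta> \<le> real (throughput N0 \<beta> x S)"
proof -
  have Sn: "S \<subseteq> {..<n}" and cS: "card S = k" using top unfolding top_set_def by auto
  have finS: "finite S" using Sn by (rule finite_subset) auto
  have kD: "k \<le> card (DD x)" using km mm_card[of x] by simp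
  have SD: "S \<subseteq> DD x" by (rule top_sub_DD[OF top kD])
  have Dn: "DD x \<subseteq> {..<n}" unfolding DD_def by auto
  have finD: "finite (DD x)" using Dn by (rule finite_subset) auto
  define F where "F = {i\<in>S. \<not> succeeds N0 \<beta> x S i}"
  define B where "B = {i\<in>DD x. \<theta> \<le> interference x (DD x) i}"
  have split: "card S = throughput N0 \<beta> x S + card F"
  proof -
    have "S = {i\<in>S. succeeds N0 \<beta> x S i} \<union> F" "{i\<in>S. succeeds N0 \<beta> x S i} \<inter> F = {}"
      unfolding F_def by auto
    then show ?thesis unfolding throughput_def using finS
      by (metis (no_types, lifting) card_Un_disjoint finite_Un)
  qed
  have FB: "F \<subseteq> B"
  proof
    fix i assume iF: "i \<in> F"
    then have iS: "i \<in> S" and ns: "\<not> succeeds N0 \<beta> x S i" unfolding F_def by auto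
    have iD: "i \<in> DD x" using iS SD by auto
    then have xi: "T \<le> x (i,i)" and iN: "i < n" unfolding DD_def by auto
    have "\<not> (x (i,i) > \<beta> * (N0 + interference x S i))" using ns iS unfolding succeeds_def by auto
    then have "\<beta> * (N0 + \<theta>) \<le> \<beta> * (N0 + interference x S i)" using Tb xi by linarith
    then have th1: "\<theta> \<le> interference x S i" using b by simp
    have "interference x S i \<le> interference x (DD x) i"
      unfolding interference_def
    proof (rule sum_mono2)
      show "finite (DD x - {i})" using finD by simp
      show "S - {i} \<subseteq> DD x - {i}" using SD by auto
      show "0 \<le> x (k, i)" if "k \<in> DD x - {i} - (S - {i})" for k
        using that Dn iN nn by auto
    qed
    then show "i \<in> B" unfolding B_def using iD th1 by auto
  qed
  have "card F \<le> card B" using FB finD unfolding B_def by (intro card_mono) auto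
  have "real (card B) * \<theta> = (\<Sum>i\<in>B. \<theta>)" by simp
  also have "\<dots> \<le> (\<Sum>i\<in>B. interference x (DD x) i)" unfolding B_def by (intro sum_mono) auto
  also have "\<dots> \<le> (\<Sum>i\<in>DD x. interference x (DD x) i)"
    using finD Dn nn by (intro sum_mono2) (auto simp: B_def intro!: intf_nonneg)
  also have "\<dots> = Wd x" unfolding Wd_def ..
  finally have "real (card B) \<le> Wd x / \<theta>" using th by (simp add: field_simps)
  then have "real (card F) \<le> Wd x / \<theta>" using \<open>card F \<le> card B\<close> by linarith
  then show ?thesis using split cS by linarith
qed


lemma int_m2: "integrable M (\<lambda>x. (mm x - n*p)^2)"
proof -
  have eq: "(\<lambda>x. (mm x - n*p)^2) = (\<lambda>x. \<Sum>a<n. \<Sum>b<n. (X a x - p) * (X b x - p))"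
  proof (rule ext)
    fix x
    have "mm x - n*p = (\<Sum>a<n. X a x - p)" unfolding mm_def by (simp add: sum_subtractf)
    then show "(mm x - n*p)^2 = (\<Sum>a<n. \<Sum>b<n. (X a x - p) * (X b x - p))"
      by (simp add: power2_eq_square sum_product)
  qed
  show ?thesis unfolding eq by (rule Bochner_Integration.integrable_sum, rule Bochner_Integration.integrable_sum, rule int_pair_m)
qed

lemma int_U2: "integrable M (\<lambda>x. (U x)^2)"
proof -
  have eq: "(\<lambda>x. (U x)^2) = (\<lambda>x. \<Sum>ab\<in>J. \<Sum>cd\<in>J. t ab x * t cd x)"
    unfolding U_def by (simp add: power2_eq_square sum_product)
  show ?thesis unfolding eq by (rule Bochner_Integration.integrable_sum, rule Bochner_Integration.integrable_sum, rule int_cross)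
qed

definition G :: "(nat \<times> nat \<Rightarrow> real) set" where
  "G = {x\<in>space M. (mm x - n*p)^2 < (n*p/2)^2 \<and> (U x)^2 < (n*p)^4 \<and> (\<forall>z\<in>I. x z \<ge> 0)}"

lemmas Mmeas = borel_measurable_power borel_measurable_diff borel_measurable_const meas_mm meas_U meas_comp borel_measurable_times borel_measurable_divide

lemma G_sets: "G \<in> sets M"
  unfolding G_def
  by (intro sets.sets_Collect_conj sets.sets_Collect_finite_All borel_measurable_less borel_measurable_le Mmeas finI)

lemma prob_G:
  assumes q: "n*p > 0"
  shows "Mp.prob G \<ge> 1 - 4/(n*p) - \<sigma>2/(n*p)^2"
proof -
  let ?q = "n*p"
  define A1 where "A1 = {x\<in>space M. (?q/2)^2 \<le> (mm x - ?q)^2}"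
  define A2 where "A2 = {x\<in>space M. ?q^4 \<le> (U x)^2}"
  define A3 where "A3 = {x\<in>space M. \<not> (\<forall>z\<in>I. x z \<ge> 0)}"
  have s1: "A1 \<in> sets M" unfolding A1_def by (intro borel_measurable_le Mmeas)
  have s2: "A2 \<in> sets M" unfolding A2_def by (intro borel_measurable_le Mmeas)
  have s3: "A3 \<in> sets M" unfolding A3_def by (intro sets.sets_Collect_neg sets.sets_Collect_finite_All borel_measurable_le Mmeas finI)
  have qq: "?q^4 > 0" by (rule zero_less_power[OF q])
  have n0: "n > 0" "p \<noteq> 0" using q by (cases n, auto)+
  have p1: "Mp.prob A1 \<le> 4/?q"
  proof -
    have "Mp.prob A1 \<le> (\<integral>x. (mm x - ?q)^2 \<partial>M) / (?q/2)^2"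
      unfolding A1_def by (rule integral_Markov_inequality_measure[OF int_m2 s1]) (use q n0 in auto)
    also have "\<dots> \<le> ?q / (?q/2)^2" using E_m q by (intro divide_right_mono) auto
    also have "\<dots> = 4/?q" using q by (simp add: field_simps power2_eq_square)
    finally show ?thesis .
  qed
  have p2: "Mp.prob A2 \<le> \<sigma>2/?q^2"
  proof -
    have "Mp.prob A2 \<le> (\<integral>x. (U x)^2 \<partial>M) / ?q^4"
      unfolding A2_def by (rule integral_Markov_inequality_measure[OF int_U2 s2]) (use q qq in auto)
    also have "\<dots> \<le> (n*n*(p*p*\<sigma>2)) / ?q^4" using E_U q by (intro divide_right_mono) auto
    also have "\<dots> = \<sigma>2/?q^2" using q by (simp add: field_simps power2_eq_square power4_eq_xxxx)
    finally show ?thesis .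
  qed
  have p3: "Mp.prob A3 = 0"
  proof -
    have "emeasure M A3 = 0"
      using AE_nonneg unfolding A3_def by (subst (asm) AE_iff_measurable[OF _ refl]) (use s3 A3_def in auto)
    then show ?thesis by (simp add: Mp.emeasure_eq_measure)
  qed
  have sub: "space M - G \<subseteq> A1 \<union> A2 \<union> A3" unfolding G_def A1_def A2_def A3_def by auto
  have "Mp.prob (space M - G) \<le> Mp.prob (A1 \<union> A2 \<union> A3)"
    using s1 s2 s3 sub by (intro Mp.finite_measure_mono) auto
  also have "\<dots> \<le> Mp.prob A1 + Mp.prob A2 + Mp.prob A3"
  proof -
    have "Mp.prob (A1 \<union> A2 \<union> A3) \<le> Mp.prob (A1 \<union> A2) + Mp.prob A3"
      using s1 s2 s3 by (intro measure_subadditive) auto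
    also have "Mp.prob (A1 \<union> A2) \<le> Mp.prob A1 + Mp.prob A2"
      using s1 s2 by (intro measure_subadditive) auto
    finally show ?thesis by simp
  qed
  finally have "Mp.prob (space M - G) \<le> 4/?q + \<sigma>2/?q^2" using p1 p2 p3 by linarith
  moreover have "Mp.prob (space M - G) = 1 - Mp.prob G" using G_sets by (rule Mp.prob_compl)
  ultimately show ?thesis by linarith
qed


lemma card_filter_sum: "finite S \<Longrightarrow> real (card {i\<in>S. Q i}) = (\<Sum>i\<in>S. if Q i then 1 else 0)"
  by (simp add: sum.If_cases Int_def)

lemma succ_sets: "{x\<in>space M. succeeds N0 \<beta> x S i} \<in> sets M"
  unfolding succeeds_def interference_def
  by (intro sets.sets_Collect_conj sets.sets_Collect_const borel_measurable_less borel_measurable_times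
      borel_measurable_add borel_measurable_sum borel_measurable_const meas_comp)

lemma target_sets:
  "{x\<in>space M. \<forall>S. top_set n k x S \<longrightarrow> c0 \<le> real (throughput N0 \<beta> x S)} \<in> sets M"
proof -
  have e: "{x\<in>space M. \<forall>S. top_set n k x S \<longrightarrow> c0 \<le> real (throughput N0 \<beta> x S)}
     = {x\<in>space M. \<forall>S\<in>Pow {..<n}. top_set n k x S \<longrightarrow> c0 \<le> (\<Sum>i\<in>S. if succeeds N0 \<beta> x S i then 1 else 0)}"
  proof -
    have "(\<forall>S. top_set n k x S \<longrightarrow> c0 \<le> real (throughput N0 \<beta> x S)) \<longleftrightarrow>
          (\<forall>S\<in>Pow {..<n}. top_set n k x S \<longrightarrow> c0 \<le> (\<Sum>i\<in>S. if succeeds N0 \<beta> x S i then 1 else 0))" for x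
    proof -
      have "real (throughput N0 \<beta> x S) = (\<Sum>i\<in>S. if succeeds N0 \<beta> x S i then 1 else 0)" if "S \<subseteq> {..<n}" for S
        unfolding throughput_def using that by (intro card_filter_sum) (auto intro: finite_subset)
      then show ?thesis unfolding top_set_def by auto
    qed
    then show ?thesis by blast
  qed
  show ?thesis unfolding e
  proof (intro sets.sets_Collect_finite_All sets.sets_Collect_imp)
    fix S assume S: "S \<in> Pow {..<n}"
    show "{x \<in> space M. top_set n k x S} \<in> sets M"
      unfolding top_set_def
      by (intro sets.sets_Collect_conj sets.sets_Collect_const sets.sets_Collect_finite_All borel_measurable_le meas_comp)
        (use S in \<open>auto intro: finite_subset\<close>)
    show "{x \<in> space M. c0 \<le> (\<Sum>i\<in>S. if succeeds N0 \<beta> x S i then 1 else 0)} \<in> sets M"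
      by (intro borel_measurable_le borel_measurable_const borel_measurable_sum measurable_If succ_sets)
  qed simp
qed

lemma G_sub:
  assumes q8: "n*p \<ge> 8" and th: "\<theta> > 0" and b: "\<beta> > 0" and Tb: "\<beta>*(N0+\<theta>) \<le> T"
    and k1: "real k \<le> n*p/2" and k2: "real k \<ge> n*p/2 - 1"
    and Cth: "8*(1 + 9/4*\<mu>)*(n*p) \<le> \<theta>" and c0: "c0 \<le> n*p/4"
  shows "G \<subseteq> {x\<in>space M. \<forall>S. top_set n k x S \<longrightarrow> c0 \<le> real (throughput N0 \<beta> x S)}"
proof safe
  fix x S assume xG: "x \<in> G" and top: "top_set n k x S"
  let ?q = "n*p"
  have q0: "?q > 0" using q8 by simp
  have x1: "(mm x - ?q)^2 < (?q/2)^2" and x2: "(U x)^2 < ?q^4" and nn: "\<forall>z\<in>I. x z \<ge> 0"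
    using xG unfolding G_def by auto
  have "\<bar>mm x - ?q\<bar>^2 < (?q/2)^2" using x1 by simp
  then have "\<bar>mm x - ?q\<bar> < ?q/2" by (rule power2_less_imp_less) (use q0 in simp)
  then have m1: "mm x \<ge> ?q/2" and m2: "mm x \<le> 3/2*?q" unfolding abs_less_iff by linarith+
  have "(U x)^2 < (?q^2)^2" using x2 by (simp add: power_mult[symmetric])
  then have "\<bar>U x\<bar>^2 < (?q^2)^2" by simp
  then have "\<bar>U x\<bar> < ?q^2" by (rule power2_less_imp_less) simp
  then have u: "U x \<le> ?q^2" by simp
  have "(mm x)^2 \<le> (3/2*?q)^2" using m1 m2 q0 by (intro power_mono) auto
  also have "(3/2*?q)^2 = 9/4*?q^2" by (simp add: power2_eq_square)
  finally have mq: "(mm x)^2 \<le> 9/4*?q^2" .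
  then have "\<mu> * (mm x)^2 \<le> \<mu> * (9/4*?q^2)" using mu_nonneg by (intro mult_left_mono) auto
  then have W: "Wd x \<le> (1 + 9/4*\<mu>) * ?q^2" using Wd_le[of x] u by (simp add: algebra_simps)
  have km: "real k \<le> mm x" using k1 m1 by linarith
  have d: "real k - Wd x / \<theta> \<le> real (throughput N0 \<beta> x S)" by (rule det[OF nn km top th b Tb])
  have "Wd x / \<theta> \<le> (1 + 9/4*\<mu>) * ?q^2 / \<theta>" using W th by (intro divide_right_mono) auto
  also have "\<dots> \<le> ?q/8"
  proof -
    have "(1 + 9/4*\<mu>) * ?q^2 = ((1 + 9/4*\<mu>) * ?q) * ?q" by (simp add: power2_eq_square)
    also have "\<dots> \<le> (\<theta>/8) * ?q"
    proof (rule mult_right_mono)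
      have "(1 + 9/4*\<mu>) * ?q = (8*(1 + 9/4*\<mu>)*?q)/8" by simp
      then show "(1 + 9/4*\<mu>) * ?q \<le> \<theta>/8" using Cth by linarith
    qed (use q0 in simp)
    finally show ?thesis using th by (simp add: field_simps)
  qed
  finally have "Wd x / \<theta> \<le> ?q/8" .
  then show "c0 \<le> real (throughput N0 \<beta> x S)" using d k2 c0 q8 by linarith
qed (auto simp: G_def)


lemma prob_target:
  assumes q8: "n*p \<ge> 8" and th: "\<theta> > 0" and b: "\<beta> > 0" and Tb: "\<beta>*(N0+\<theta>) \<le> T"
    and k1: "real k \<le> n*p/2" and k2: "real k \<ge> n*p/2 - 1"
    and Cth: "8*(1 + 9/4*\<mu>)*(n*p) \<le> \<theta>" and c0: "c0 \<le> n*p/4"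
  shows "measure M {x\<in>space M. \<forall>S. top_set n k x S \<longrightarrow> c0 \<le> real (throughput N0 \<beta> x S)}
     \<ge> 1 - 4/(n*p) - \<sigma>2/(n*p)^2"
proof -
  have "1 - 4/(n*p) - \<sigma>2/(n*p)^2 \<le> Mp.prob G" using q8 by (intro prob_G) auto
  also have "\<dots> \<le> measure M {x\<in>space M. \<forall>S. top_set n k x S \<longrightarrow> c0 \<le> real (throughput N0 \<beta> x S)}"
    by (intro Mp.finite_measure_mono G_sub[OF assms] target_sets)
  finally show ?thesis .
qed

end



lemma s_lim:
  assumes "\<alpha> > 2"
  shows "filterlim (\<lambda>n::nat. real n powr (1/(1+\<alpha>))) at_top sequentially"
proof -
  have "1/(1+\<alpha>) > 0" using assms by simp
  then show ?thesis by real_asymp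
qed


lemma q_bounds:
  fixes \<alpha> L s :: real and n :: nat
  assumes a: "\<alpha> > 2" and L: "L \<ge> 1" and s: "s \<ge> 1" and sn: "s powr (1+\<alpha>) = real n"
  shows "s / (2 * L) powr \<alpha> \<le> n * (1 + L * s) powr (-\<alpha>)" and "n * (1 + L * s) powr (-\<alpha>) \<le> s / L powr \<alpha>"
proof -
  have Ls: "L * s \<ge> 1" using mult_mono[OF L s] L by simp
  have pos: "1 + L * s > 0" using Ls by simp
  have eq: "n * (1 + L * s) powr (-\<alpha>) = s * (s/(1 + L * s)) powr \<alpha>"
  proof -
    have "real n = s * s powr \<alpha>" using sn s by (simp add: powr_add)
    moreover have "(s/(1 + L * s)) powr \<alpha> = s powr \<alpha> / (1 + L * s) powr \<alpha>" using s pos by (simp add: powr_divide)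
    moreover have "(1 + L * s) powr (-\<alpha>) = 1 / (1 + L * s) powr \<alpha>" by (simp add: powr_minus_divide)
    ultimately show ?thesis by simp
  qed
  have r1: "1/(2 * L) \<le> s/(1 + L * s)"
  proof -
    have "1 + L * s \<le> 2 * L * s" using Ls by simp
    then show ?thesis using L s pos by (simp add: divide_simps)
  qed
  have r2: "s/(1 + L * s) \<le> 1/L" using L s pos by (simp add: divide_simps)
  have "(1/(2 * L)) powr \<alpha> \<le> (s/(1 + L * s)) powr \<alpha>" using r1 a L by (intro powr_mono2) auto
  then have "s * (1/(2 * L)) powr \<alpha> \<le> s * (s/(1 + L * s)) powr \<alpha>" using s by (intro mult_left_mono) auto
  moreover have "(1/(2 * L)) powr \<alpha> = 1 / (2 * L) powr \<alpha>" using L by (simp add: powr_divide)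
  ultimately show "s / (2 * L) powr \<alpha> \<le> n * (1 + L * s) powr (-\<alpha>)" using eq by simp
  have "(s/(1 + L * s)) powr \<alpha> \<le> (1/L) powr \<alpha>" using r2 a s pos by (intro powr_mono2) auto
  then have "s * (s/(1 + L * s)) powr \<alpha> \<le> s * (1/L) powr \<alpha>" using s by (intro mult_left_mono) auto
  moreover have "(1/L) powr \<alpha> = 1 / L powr \<alpha>" using L by (simp add: powr_divide)
  ultimately show "n * (1 + L * s) powr (-\<alpha>) \<le> s / L powr \<alpha>" using eq by simp
qed


theorem corollary3:
  fixes \<alpha> N0 \<beta> :: real
  assumes "\<alpha> > 2" and "N0 \<ge> 0" and "\<beta> > 0"
  shows "\<exists>c > 0. \<exists>k :: nat \<Rightarrow> nat. (\<forall>n. k n \<le> n) \<and>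
    ((\<lambda>n. measure (channel_space \<alpha> n)
        {\<gamma> \<in> space (channel_space \<alpha> n).
           \<forall>S. top_set n (k n) \<gamma> S \<longrightarrow>
             real (throughput N0 \<beta> \<gamma> S) \<ge> c * real n powr (1 / (1 + \<alpha>))})
      \<longlonglongrightarrow> 1)"
proof -
  note a = assms(1) and N0 = assms(2) and b = assms(3)
  define mu0 where "mu0 = lebesgue_integral (pareto_dist \<alpha>) (\<lambda>v. v)"
  define sig0 where "sig0 = lebesgue_integral (pareto_dist \<alpha>) (\<lambda>v. (v - mu0)^2)"
  define C where "C = 1 + 9/4 * mu0"
  define L where "L = max 1 ((16*C*\<beta>) powr (1/(1+\<alpha>)))"
  define c' where "c' = 1 / (2 * L) powr \<alpha>"
  define c where "c = c' / 4"
  define sq where "sq n = real n powr (1/(1+\<alpha>))" for n :: nat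
  define pp where "pp n = (1 + L * sq n) powr (-\<alpha>)" for n
  define qq where "qq n = real n * pp n" for n
  define k where "k n = nat \<lfloor>qq n / 2\<rfloor>" for n
  have mu0: "mu0 \<ge> 0" unfolding mu0_def using AE_pareto_nonneg by (intro integral_nonneg_AE)
  have sig0: "sig0 \<ge> 0" unfolding sig0_def by simp
  have C1: "C \<ge> 1" unfolding C_def using mu0 by simp
  have L1: "L \<ge> 1" unfolding L_def by simp
  have c'0: "c' > 0" unfolding c'_def using L1 by simp
  have LC: "L powr (1+\<alpha>) \<ge> 16*C*\<beta>"
  proof -
    have pos: "16*C*\<beta> > 0" using C1 b by simp
    have "16*C*\<beta> = ((16*C*\<beta>) powr (1/(1+\<alpha>))) powr (1+\<alpha>)"
      using pos a by (simp add: powr_powr)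
    also have "\<dots> \<le> L powr (1+\<alpha>)" unfolding L_def using a by (intro powr_mono2) auto
    finally show ?thesis .
  qed
  have LL: "L powr (1+\<alpha>) = L * L powr \<alpha>" using L1 by (simp add: powr_add)
  have sq_nonneg: "sq n \<ge> 0" for n unfolding sq_def by simp
  have pp_le: "pp n \<le> 1" "pp n \<ge> 0" for n
  proof -
    have "(1 + L * sq n) powr \<alpha> \<ge> 1" using a L1 sq_nonneg[of n] by (intro ge_one_powr_ge_zero) auto
    then show "pp n \<le> 1" "pp n \<ge> 0" unfolding pp_def by (auto simp: powr_minus inverse_le_1_iff)
  qed
  have kn: "k n \<le> n" for n
  proof -
    have "real n * pp n \<le> real n * 1" using pp_le[of n] by (intro mult_left_mono) auto
    then have "qq n / 2 \<le> real n" unfolding qq_def by simp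
    then have "\<lfloor>qq n / 2\<rfloor> \<le> int n" by linarith
    then show ?thesis unfolding k_def by simp
  qed
  have slim: "filterlim sq at_top sequentially" unfolding sq_def by (rule s_lim[OF a])
  define R where "R = max 1 (max (8/c') (2*\<beta>*N0/L))"
  define lower where "lower n = 1 - 4/(c' * sq n) - sig0/(c' * sq n)^2" for n
  have ev: "eventually (\<lambda>n. R \<le> sq n) sequentially" using slim by (simp add: filterlim_at_top)
  have main: "lower n \<le> measure (channel_space \<alpha> n)
        {\<gamma> \<in> space (channel_space \<alpha> n).
           \<forall>S. top_set n (k n) \<gamma> S \<longrightarrow>
             real (throughput N0 \<beta> \<gamma> S) \<ge> c * real n powr (1 / (1 + \<alpha>))}"
    if R: "R \<le> sq n" for n
  proof -
    have s1: "sq n \<ge> 1" using R unfolding R_def by simp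
    have sn: "sq n powr (1+\<alpha>) = real n"
    proof -
      have "n \<noteq> 0" using s1 unfolding sq_def by (cases n) auto
      then show ?thesis unfolding sq_def using a by (simp add: powr_powr)
    qed
    have qlo: "sq n / (2 * L) powr \<alpha> \<le> qq n" and qhi: "qq n \<le> sq n / L powr \<alpha>"
      using q_bounds[OF a L1 s1 sn] unfolding qq_def pp_def by auto
    have qlo': "c' * sq n \<le> qq n" using qlo unfolding c'_def by simp
    have q8: "qq n \<ge> 8"
    proof -
      have "8/c' \<le> sq n" using R unfolding R_def by simp
      then have "8 \<le> c' * sq n" using c'0 by (simp add: field_simps)
      then show ?thesis using qlo' by simp
    qed
    define T where "T = L * sq n"
    define \<theta> where "\<theta> = T/\<beta> - N0"
    interpret chan \<alpha> n T using a L1 sq_nonneg[of n] unfolding T_def by unfold_locales auto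
    have mu_eq: "\<mu> = mu0" unfolding \<mu>_def mu0_def ..
    have sig_eq: "\<sigma>2 = sig0" unfolding \<sigma>2_def sig0_def mu_eq ..
    have p_eq: "p = pp n" unfolding p_def by (simp add: pp_def T_def)
    have halfN: "N0 \<le> L * sq n / (2*\<beta>)"
    proof -
      have "2*\<beta>*N0/L \<le> sq n" using R unfolding R_def by simp
      then have "2*\<beta>*N0 \<le> L * sq n" using L1 by (simp add: field_simps)
      then show ?thesis using b by (simp add: field_simps)
    qed
    have th_ge: "\<theta> \<ge> L * sq n / (2*\<beta>)" unfolding \<theta>_def T_def using halfN b by (simp add: field_simps)
    have th0: "\<theta> > 0"
    proof -
      have "L * sq n / (2*\<beta>) > 0" using L1 s1 b by simp
      then show ?thesis using th_ge by linarith
    qed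
    have Cth: "8*(1 + 9/4*\<mu>)*(n*p) \<le> \<theta>"
    proof -
      have "8*(1 + 9/4*\<mu>)*(n*p) = 8*C*qq n" unfolding mu_eq C_def qq_def p_eq by simp
      also have "\<dots> \<le> 8*C*(sq n / L powr \<alpha>)" using qhi C1 by (intro mult_left_mono) auto
      also have "\<dots> \<le> L * sq n / (2*\<beta>)"
      proof -
        have Lp: "L powr \<alpha> > 0" using L1 by simp
        have "16*C*\<beta> \<le> L * L powr \<alpha>" using LC LL by simp
        then have "16*C*\<beta> * sq n \<le> L * L powr \<alpha> * sq n" using s1 by (intro mult_right_mono) auto
        then show ?thesis using Lp b by (simp add: field_simps)
      qed
      also have "\<dots> \<le> \<theta>" by (rule th_ge)
      finally show ?thesis .
    qed
    have Tb: "\<beta>*(N0+\<theta>) \<le> T" unfolding \<theta>_def using b by (simp add: field_simps)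
    have k1: "real (k n) \<le> n*p/2" and k2: "real (k n) \<ge> n*p/2 - 1"
    proof -
      have qn: "n*p = qq n" unfolding qq_def p_eq ..
      have "qq n \<ge> 0" using q8 by simp
      then show "real (k n) \<le> n*p/2" "real (k n) \<ge> n*p/2 - 1" unfolding k_def qn by linarith+
    qed
    have c0: "c * real n powr (1 / (1 + \<alpha>)) \<le> n*p/4"
      using qlo' unfolding c_def sq_def qq_def p_eq by simp
    have q8': "n*p \<ge> 8" using q8 unfolding qq_def p_eq .
    note pt = prob_target[OF q8' th0 b Tb k1 k2 Cth c0]
    have "lower n \<le> 1 - 4/(n*p) - \<sigma>2/(n*p)^2"
    proof -
      have qpos: "c' * sq n > 0" using c'0 s1 by simp
      have qq': "c' * sq n \<le> n*p" using qlo' unfolding qq_def p_eq .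
      have "4/(n*p) \<le> 4/(c' * sq n)" using qpos qq' by (intro divide_left_mono) auto
      moreover have "\<sigma>2/(n*p)^2 \<le> sig0/(c' * sq n)^2" unfolding sig_eq
      proof -
        have "(c' * sq n)^2 \<le> (n*p)^2" using qpos qq' by (intro power_mono) auto
        moreover have "(c' * sq n)^2 > 0" by (rule zero_less_power[OF qpos])
        ultimately show "sig0/(n*p)^2 \<le> sig0/(c' * sq n)^2"
        proof -
          assume A: "(c' * sq n)^2 \<le> (n*p)^2" and B: "(c' * sq n)^2 > 0"
          have "(n*p)^2 > 0" using A B by linarith
          then show ?thesis using A B sig0 by (intro divide_left_mono mult_pos_pos) auto
        qed
      qed
      ultimately show ?thesis unfolding lower_def by linarith
    qed
    then show ?thesis using pt by simp
  qed
  have upper: "measure (channel_space \<alpha> n)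
        {\<gamma> \<in> space (channel_space \<alpha> n).
           \<forall>S. top_set n (k n) \<gamma> S \<longrightarrow>
             real (throughput N0 \<beta> \<gamma> S) \<ge> c * real n powr (1 / (1 + \<alpha>))} \<le> 1" for n
  proof -
    interpret chan \<alpha> n 0 using a by unfold_locales auto
    show ?thesis by (rule Mp.prob_le_1)
  qed
  have low_lim: "lower \<longlonglongrightarrow> 1"
  proof -
    have inv: "(\<lambda>n. inverse (sq n)) \<longlonglongrightarrow> 0" by (rule tendsto_inverse_0_at_top[OF slim])
    have "(\<lambda>n. 1 - 4/c' * inverse (sq n) - sig0/c'^2 * (inverse (sq n))^2) \<longlonglongrightarrow> 1 - 4/c' * 0 - sig0/c'^2 * 0^2"
      by (intro tendsto_intros inv)
    moreover have "lower = (\<lambda>n. 1 - 4/c' * inverse (sq n) - sig0/c'^2 * (inverse (sq n))^2)"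
      unfolding lower_def by (rule ext) (simp add: field_simps power2_eq_square)
    ultimately show ?thesis by simp
  qed
  have "(\<lambda>n. measure (channel_space \<alpha> n)
        {\<gamma> \<in> space (channel_space \<alpha> n).
           \<forall>S. top_set n (k n) \<gamma> S \<longrightarrow>
             real (throughput N0 \<beta> \<gamma> S) \<ge> c * real n powr (1 / (1 + \<alpha>))}) \<longlonglongrightarrow> 1"
  proof (rule tendsto_sandwich[OF _ _ low_lim tendsto_const])
    show "eventually (\<lambda>n. lower n \<le> measure (channel_space \<alpha> n)
        {\<gamma> \<in> space (channel_space \<alpha> n).
           \<forall>S. top_set n (k n) \<gamma> S \<longrightarrow>
             real (throughput N0 \<beta> \<gamma> S) \<ge> c * real n powr (1 / (1 + \<alpha>))}) sequentially"
      using ev by (rule eventually_mono) (rule main)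
    show "eventually (\<lambda>n. measure (channel_space \<alpha> n)
        {\<gamma> \<in> space (channel_space \<alpha> n).
           \<forall>S. top_set n (k n) \<gamma> S \<longrightarrow>
             real (throughput N0 \<beta> \<gamma> S) \<ge> c * real n powr (1 / (1 + \<alpha>))} \<le> 1) sequentially"
      using upper by simp
  qed
  moreover have "c > 0" unfolding c_def using c'0 by simp
  ultimately show ?thesis using kn by blast
qed


end
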